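(* Let $L\mathfrak{g}^{\sigma^*}$, $\widetilde G$ and its coadjoint action $\mathrm{Ad}^*_{\widetilde G}$ be as in the context. For integers $m\ge 0$ and $p\ge1$ let $$\widetilde{\mathfrak g}^*_{(m,p)}=\Big\{X\in L\mathfrak{g}^{\sigma^*}\ :\ X(z)=\sum_{j=-m}^{p}X_jz^j\Big\}.$$ Then $\widetilde{\mathfrak g}^*_{(m,p)}$ is invariant under $\mathrm{Ad}^*_{\widetilde G}(g)$ for every $g\in\widetilde G$.
   Context: $LG$ is the group of smooth loops $g:S^1\to GL(n,\mathbb{C})$ with $\overline{g(z)}=g(\bar z)$; $LG^{\Sigma}=\{g\in LG: g(z)g(-z)^T=I\}$. $LG^{\Sigma}_+$ (resp. $LG^{\Sigma}_-$) is the subgroup of loops in $LG^{\Sigma}$ extending analytically (as invertible matrices) to the interior (resp. exterior) of the unit circle, with the extra requirement $g(\infty)=I$ for $LG^{\Sigma}_-$. $\widetilde G=\{g\in LG^{\Sigma}: g=g_+g_-^{-1},\ g_+\in LG^{\Sigma}_+,\ g_-\in LG^{\Sigma}_-\}$; the factors $g_\pm$ are unique. $L\mathfrak{g}^{\sigma^*}$ is the space of loops $X(z)=\sum_jX_jz^j$ with real $n\times n$ coefficients, $X_{2j}$ symmetric and $X_{2j+1}$ skew-symmetric. $\Pi_+$ (resp. $\Pi_-$) is the projection $\sum_jX_jz^j\mapsto\sum_{j\ge0}X_jz^j$ (resp. $\sum_{j<0}X_jz^j$). The coadjoint action of $g=g_+g_-^{-1}\in\widetilde G$ on $A\in L\mathfrak{g}^{\sigma^*}$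 is $\mathrm{Ad}^*_{\widetilde G}(g)A=\Pi_-(g_+^{-1}Ag_+)+\Pi_+(g_-^{-1}Ag_-)$. *)

theory Defs
  imports "HOL-Analysis.Analysis"
begin

type_synonym 'n cmat = "complex ^ 'n ^ 'n"

text \<open>Loops are functions on the complex plane of which only the values on the unit
circle (sphere 0 1) matter.\<close>

definition cscale :: "complex \<Rightarrow> 'n::finite cmat \<Rightarrow> 'n::finite cmat" where
  "cscale c M = (\<chi> a b. c * M $ a $ b)"

definition cnj_mat :: "'n::finite cmat \<Rightarrow> 'n::finite cmat" where
  "cnj_mat M = (\<chi> a b. cnj (M $ a $ b))"

definition smooth_loop :: "(complex \<Rightarrow> 'n::finite cmat) \<Rightarrow> bool" where
  "smooth_loop g \<longleftrightarrow> (\<exists>D :: nat \<Rightarrow> real \<Rightarrow> 'n::finite cmat.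
      D 0 = (\<lambda>t. g (cis t)) \<and>
      (\<forall>k t. (D k has_vector_derivative D (Suc k) t) (at t)))"

definition fourier_coeff :: "(complex \<Rightarrow> 'n::finite cmat) \<Rightarrow> int \<Rightarrow> 'n::finite cmat" where
  "fourier_coeff X j = (\<chi> a b. integral {0..2*pi}
      (\<lambda>t. cis (- of_int j * t) * X (cis t) $ a $ b) / complex_of_real (2*pi))"

definition Pi_plus :: "(complex \<Rightarrow> 'n::finite cmat) \<Rightarrow> complex \<Rightarrow> 'n::finite cmat" where
  "Pi_plus X z = (\<Sum>k. cscale (z ^ k) (fourier_coeff X (int k)))"

definition Pi_minus :: "(complex \<Rightarrow> 'n::finite cmat) \<Rightarrow> complex \<Rightarrow> 'n::finite cmat" where
  "Pi_minus X z = (\<Sum>k. cscale (inverse z ^ Suc k) (fourier_coeff X (- int (Suc k))))"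

definition LG :: "(complex \<Rightarrow> 'n::finite cmat) set" where
  "LG = {g. smooth_loop g \<and> (\<forall>z\<in>sphere 0 1. invertible (g z)) \<and>
            (\<forall>z\<in>sphere 0 1. cnj_mat (g z) = g (cnj z))}"

definition LG_Sigma :: "(complex \<Rightarrow> 'n::finite cmat) set" where
  "LG_Sigma = {g. g \<in> LG \<and> (\<forall>z\<in>sphere 0 1. g z ** transpose (g (- z)) = mat 1)}"

definition LG_Sigma_plus :: "(complex \<Rightarrow> 'n::finite cmat) set" where
  "LG_Sigma_plus = {g. g \<in> LG_Sigma \<and>
     (\<exists>G :: complex \<Rightarrow> 'n::finite cmat. continuous_on (cball 0 1) G \<and>
        (\<forall>a b. (\<lambda>z. G z $ a $ b) holomorphic_on ball 0 1) \<and>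
        (\<forall>z\<in>cball 0 1. invertible (G z)) \<and>
        (\<forall>z\<in>sphere 0 1. G z = g z))}"

definition LG_Sigma_minus :: "(complex \<Rightarrow> 'n::finite cmat) set" where
  "LG_Sigma_minus = {g. g \<in> LG_Sigma \<and>
     (\<exists>G :: complex \<Rightarrow> 'n::finite cmat. continuous_on {z. 1 \<le> norm z} G \<and>
        (\<forall>a b. (\<lambda>z. G z $ a $ b) holomorphic_on {z. 1 < norm z}) \<and>
        (\<forall>z\<in>{z. 1 \<le> norm z}. invertible (G z)) \<and>
        (G \<longlongrightarrow> mat 1) at_infinity \<and>
        (\<forall>z\<in>sphere 0 1. G z = g z))}"

definition G_tilde :: "(complex \<Rightarrow> 'n::finite cmat) set" where
  "G_tilde = {g. g \<in> LG_Sigma \<and> (\<exists>gp gm. gp \<in> LG_Sigma_plus \<and> gm \<in> LG_Sigma_minus \<and>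
                 (\<forall>z\<in>sphere 0 1. g z = gp z ** matrix_inv (gm z)))}"

definition Lg_sigma_star :: "(complex \<Rightarrow> 'n::finite cmat) set" where
  "Lg_sigma_star = {X. smooth_loop X \<and>
     (\<forall>j a b. Im (fourier_coeff X j $ a $ b) = 0) \<and>
     (\<forall>j. even j \<longrightarrow> transpose (fourier_coeff X j) = fourier_coeff X j) \<and>
     (\<forall>j. odd j \<longrightarrow> transpose (fourier_coeff X j) = - fourier_coeff X j)}"

definition g_star_mp :: "nat \<Rightarrow> nat \<Rightarrow> (complex \<Rightarrow> 'n::finite cmat) set" where
  "g_star_mp m p = {X. X \<in> Lg_sigma_star \<and>
     (\<forall>z\<in>sphere 0 1. X z = (\<Sum>j\<in>{- int m..int p}. cscale (z powi j) (fourier_coeff X j)))}"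

text \<open>Coadjoint action of g = g_+ g_-^{-1}, given via its (unique) factors.\<close>
definition Ad_star :: "(complex \<Rightarrow> 'n::finite cmat) \<Rightarrow> (complex \<Rightarrow> 'n::finite cmat) \<Rightarrow>
    (complex \<Rightarrow> 'n::finite cmat) \<Rightarrow> complex \<Rightarrow> 'n::finite cmat" where
  "Ad_star gp gm A z =
     Pi_minus (\<lambda>w. matrix_inv (gp w) ** A w ** gp w) z +
     Pi_plus (\<lambda>w. matrix_inv (gm w) ** A w ** gm w) z"

end

theory Submission
  imports Defs "HOL-Complex_Analysis.Complex_Analysis"
begin
lemma cis_int_period: "cis (of_int j * (t + 2*pi)) = cis (of_int j * t)"
proof -
  have "cis (of_int j * (t + 2*pi)) = cis (of_int j * t) * cis (of_int j * (2*pi))"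
    by (simp add: cis_mult distrib_left)
  also have "cis (of_int j * (2*pi)) = cis (2*pi) powi j" by (rule cis_power_int[symmetric])
  also have "\<dots> = 1" by simp
  finally show ?thesis by simp
qed

lemma periodic_shift_integral:
  fixes f :: "real \<Rightarrow> complex"
  assumes cont: "continuous_on UNIV f" and per: "\<And>t. f (t + 2*pi) = f t"
    and c: "0 \<le> c" "c \<le> 2*pi"
  shows "integral {0..2*pi} (\<lambda>t. f (t + c)) = integral {0..2*pi} f"
proof -
  have int: "\<And>a b. f integrable_on {a..b}"
    by (rule integrable_continuous_real) (rule continuous_on_subset[OF cont], simp)
  have "integral {0..2*pi} (\<lambda>t. f (t + c)) = integral {c..2*pi+c} f"
    using integral_shift_real_ivl[where a=c and b="2*pi+c" and c=c and f=f]
    by (simp only: diff_self add_diff_cancel_right')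
  also have "\<dots> = integral {c..2*pi} f + integral {2*pi..2*pi+c} f"
    using Henstock_Kurzweil_Integration.integral_combine[where a=c and c="2*pi" and b="2*pi+c" and f=f] int c by simp
  also have "integral {2*pi..2*pi+c} f = integral {0..c} (\<lambda>t. f (t + 2*pi))"
    using integral_shift_real_ivl[where a="2*pi" and b="2*pi+c" and c="2*pi" and f=f]
    by (simp only: diff_self add_diff_cancel_left')
  also have "\<dots> = integral {0..c} f" using per by simp
  also have "integral {c..2*pi} f + integral {0..c} f = integral {0..2*pi} f"
    using Henstock_Kurzweil_Integration.integral_combine[where a=0 and c=c and b="2*pi" and f=f] int c by (simp add: add.commute)
  finally show ?thesis .
qed

lemma periodic_reflect_integral:
  fixes f :: "real \<Rightarrow> complex"
  assumes cont: "continuous_on UNIV f" and per: "\<And>t. f (t + 2*pi) = f t"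
  shows "integral {0..2*pi} (\<lambda>t. f (- t)) = integral {0..2*pi} f"
proof -
  have "integral {0..2*pi} (\<lambda>t. f (- t)) = integral {-(2*pi)..0} f"
    using Henstock_Kurzweil_Integration.integral_reflect_real[where a="-(2*pi)" and b=0 and f=f]
    by (simp only: minus_zero minus_minus)
  also have "\<dots> = integral {0..2*pi} (\<lambda>t. f (t + - (2*pi)))"
    using integral_shift_real_ivl[where a="-(2*pi)" and b=0 and c="-(2*pi)" and f=f]
    by (simp only: diff_self diff_minus_eq_add add.left_neutral)
  also have "\<dots> = integral {0..2*pi} f"
    using per[of "t - 2*pi" for t] by (simp add: algebra_simps)
  finally show ?thesis .
qed

lemma cauchy_disc_integral:
  fixes F :: "complex \<Rightarrow> complex"
  assumes cont: "continuous_on (cball 0 1) F"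
    and hol: "F holomorphic_on (ball 0 1 - {0})"
  shows "integral {0..2*pi} (\<lambda>t. cis t * F (cis t)) = 0"
proof -
  have "(F has_contour_integral 0) (circlepath 0 1)"
  proof (rule Cauchy_theorem_convex[where K="{0}"])
    fix x assume "x \<in> interior (cball (0::complex) 1) - {0}"
    then show "F field_differentiable at x"
      using hol by (intro holomorphic_on_imp_differentiable_at[of _ "ball 0 1 - {0}"]) auto
  qed (use cont in auto)
  then have "((\<lambda>t. F (0 + 1 * cis t) * 1 * \<i> * cis t) has_integral 0) {0..2*pi}"
    unfolding circlepath_def by (subst (asm) has_contour_integral_part_circlepath_iff) auto
  then have "((\<lambda>t. (- \<i>) * (F (0 + 1 * cis t) * 1 * \<i> * cis t)) has_integral (- \<i>) * 0) {0..2*pi}"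
    by (rule has_integral_mult_right)
  then have "((\<lambda>t. cis t * F (cis t)) has_integral 0) {0..2*pi}"
    by (simp add: algebra_simps)
  then show ?thesis by (rule integral_unique)
qed

lemma cauchy_disc_integral':
  fixes F :: "complex \<Rightarrow> complex"
  assumes cont: "continuous_on (cball 0 1) F"
    and hol: "F holomorphic_on (ball 0 1 - {0})"
  shows "integral {0..2*pi} (\<lambda>t. cis (-t) * F (cis (-t))) = 0"
proof -
  let ?g = "\<lambda>t. cis t * F (cis t)"
  have c: "continuous_on UNIV ?g"
    by (intro continuous_intros continuous_on_compose2[OF cont]) auto
  have "integral {0..2*pi} (\<lambda>t. ?g (-t)) = integral {0..2*pi} ?g"
    by (rule periodic_reflect_integral[OF c]) (simp add: cis_mult[symmetric])
  then show ?thesis using cauchy_disc_integral[OF assms] by simp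
qed

lemma orth_integral:
  "integral {0..2*pi} (\<lambda>t. cis (of_int k * t)) = (if k = 0 then 2*pi else 0)"
proof (cases "k = 0")
  case True then show ?thesis by (simp add: scaleR_conv_of_real)
next
  case False
  have "((\<lambda>t. cis (of_int k * t)) has_integral
      (cis (of_int k * (2*pi)) / (\<i> * of_int k) - cis (of_int k * 0) / (\<i> * of_int k))) {0..2*pi}"
  proof (rule fundamental_theorem_of_calculus)
    fix t :: real
    show "((\<lambda>t. cis (of_int k * t) / (\<i> * of_int k)) has_vector_derivative cis (of_int k * t))
        (at t within {0..2*pi})"
      using False
      by (auto intro!: derivative_eq_intros ext simp: has_vector_derivative_def scaleR_conv_of_real field_simps)
  qed simp
  moreover have "cis (of_int k * (2*pi)) = 1"
    using cis_int_period[of k 0] by simp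
  ultimately show ?thesis using False by (simp add: integral_unique)
qed

lemma cscale_nth[simp]: "cscale c M $ a $ b = c * M $ a $ b"
  by (simp add: cscale_def)

lemma fourier_coeff_nth:
  "fourier_coeff X j $ a $ b =
     integral {0..2*pi} (\<lambda>t. cis (- of_int j * t) * X (cis t) $ a $ b) / complex_of_real (2*pi)"
  by (simp add: fourier_coeff_def)

lemma fourier_coeff_cong:
  assumes "\<forall>z\<in>sphere 0 1. X z = X' z"
  shows "fourier_coeff X = fourier_coeff X'"
proof -
  have "\<And>t. X (cis t) = X' (cis t)" using assms by simp
  then show ?thesis by (simp add: fourier_coeff_def fun_eq_iff)
qed

lemma cis_powi_mult: "cis (- of_int j * t) * cis t powi i = cis (of_int (i - j) * t)"
  by (simp add: cis_power_int cis_mult algebra_simps)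

lemma coeff_trig:
  fixes X :: "complex \<Rightarrow> complex^'n::finite^'n"
  assumes S: "finite S" and X: "\<forall>z\<in>sphere 0 1. X z = (\<Sum>i\<in>S. cscale (z powi i) (d i))"
  shows "fourier_coeff X j = (if j \<in> S then d j else 0)"
proof -
  have "fourier_coeff X j $ a $ b = (if j \<in> S then d j else 0) $ a $ b" for a b
  proof -
    have "\<And>t. cis (- of_int j * t) * X (cis t) $ a $ b =
         (\<Sum>i\<in>S. d i $ a $ b * cis (of_int (i - j) * t))"
    proof -
      fix t
      have "cis (- of_int j * t) * X (cis t) $ a $ b =
         (\<Sum>i\<in>S. d i $ a $ b * (cis (- of_int j * t) * cis t powi i))"
        using X by (simp add: sum_distrib_left algebra_simps)
      then show "cis (- of_int j * t) * X (cis t) $ a $ b =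
         (\<Sum>i\<in>S. d i $ a $ b * cis (of_int (i - j) * t))"
        by (simp only: cis_powi_mult)
    qed
    then have "integral {0..2*pi} (\<lambda>t. cis (- of_int j * t) * X (cis t) $ a $ b) =
        integral {0..2*pi} (\<lambda>t. \<Sum>i\<in>S. d i $ a $ b * cis (of_int (i - j) * t))"
      by simp
    also have "\<dots> = (\<Sum>i\<in>S. integral {0..2*pi} (\<lambda>t. d i $ a $ b * cis (of_int (i - j) * t)))"
      by (rule integral_sum[OF S]) (auto intro!: integrable_continuous_real continuous_intros)
    also have "\<dots> = (\<Sum>i\<in>S. if i = j then d i $ a $ b * (2*pi) else 0)"
      by (intro sum.cong refl, subst integral_mult_right, subst orth_integral) simp
    also have "\<dots> = (if j \<in> S then d j $ a $ b * (2*pi) else 0)"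
      using S by simp
    finally show ?thesis by (simp add: fourier_coeff_nth)
  qed
  then show ?thesis by (simp add: vec_eq_iff)
qed

lemma cis_add_2pi: "cis (t + 2*pi) = cis t"
  by (simp add: cis_mult[symmetric])

lemma cis_add_pi: "cis (t + pi) = - cis t"
  by (simp add: cis_mult[symmetric])

lemma coeff_real:
  fixes X :: "complex \<Rightarrow> complex^'n::finite^'n"
  assumes cont: "\<And>a b. continuous_on UNIV (\<lambda>t. X (cis t) $ a $ b)"
    and conj: "\<forall>z\<in>sphere 0 1. cnj_mat (X z) = X (cnj z)"
  shows "Im (fourier_coeff X j $ a $ b) = 0"
proof -
  define f where "f t = cis (- of_int j * t) * X (cis t) $ a $ b" for t
  have fc: "continuous_on UNIV f" unfolding f_def
    by (intro continuous_intros cont)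
  have fp: "f (t + 2*pi) = f t" for t
    using cis_int_period[of "-j" t] by (simp add: f_def cis_add_2pi)
  have "cnj (f t) = f (- t)" for t
  proof -
    have "cnj (X (cis t) $ a $ b) = cnj_mat (X (cis t)) $ a $ b" by (simp add: cnj_mat_def)
    also have "\<dots> = X (cis (- t)) $ a $ b" using conj by (simp add: cis_cnj)
    finally show ?thesis by (simp add: f_def cis_cnj)
  qed
  then have "cnj (integral {0..2*pi} f) = integral {0..2*pi} (\<lambda>t. f (- t))"
    by (simp add: Henstock_Kurzweil_Integration.integral_cnj)
  also have "\<dots> = integral {0..2*pi} f"
    by (rule periodic_reflect_integral[OF fc fp])
  finally have h: "cnj (integral {0..2*pi} f) = integral {0..2*pi} f" .
  have "Im (cnj (integral {0..2*pi} f)) = Im (integral {0..2*pi} f)" using h by simp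
  then have "Im (integral {0..2*pi} f) = 0" by simp
  moreover have "fourier_coeff X j $ a $ b = integral {0..2*pi} f / complex_of_real (2*pi)"
    unfolding fourier_coeff_nth f_def by (rule refl)
  ultimately show ?thesis
    by (simp add: Im_divide_of_real)
qed

lemma coeff_sym:
  fixes X :: "complex \<Rightarrow> complex^'n::finite^'n"
  assumes cont: "\<And>a b. continuous_on UNIV (\<lambda>t. X (cis t) $ a $ b)"
    and tr: "\<forall>z\<in>sphere 0 1. transpose (X z) = X (- z)"
  shows "transpose (fourier_coeff X j) = (if even j then fourier_coeff X j else - fourier_coeff X j)"
proof -
  have key: "fourier_coeff X j $ b $ a = (-1) powi j * fourier_coeff X j $ a $ b" for a b
  proof -
    define f where "f t = cis (- of_int j * t) * X (cis t) $ a $ b" for t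
    have fc: "continuous_on UNIV f" unfolding f_def
      by (intro continuous_intros cont)
    have fp: "f (t + 2*pi) = f t" for t
      using cis_int_period[of "-j" t] by (simp add: f_def cis_add_2pi)
    have cpi: "cis (of_int j * pi) = (-1) powi j"
      using cis_power_int[of pi j] by simp
    have e: "cis (- of_int j * t) * X (cis t) $ b $ a = (-1) powi j * f (t + pi)" for t
    proof -
      have "X (cis t) $ b $ a = transpose (X (cis t)) $ a $ b" by (simp add: transpose_def)
      also have "\<dots> = X (- cis t) $ a $ b" using tr by simp
      also have "\<dots> = X (cis (t + pi)) $ a $ b" by (simp add: cis_add_pi)
      finally have 1: "X (cis t) $ b $ a = X (cis (t + pi)) $ a $ b" .
      have "cis (- of_int j * t) = cis (of_int j * pi) * cis (- of_int j * (t + pi))"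
        by (simp add: cis_mult algebra_simps)
      then show ?thesis using 1 cpi by (simp add: f_def)
    qed
    have "integral {0..2*pi} (\<lambda>t. cis (- of_int j * t) * X (cis t) $ b $ a) =
          (-1) powi j * integral {0..2*pi} (\<lambda>t. f (t + pi))"
    proof -
      have "(\<lambda>t. cis (- of_int j * t) * X (cis t) $ b $ a) = (\<lambda>t. (-1) powi j * f (t + pi))"
        by (rule ext, rule e)
      then show ?thesis by (simp only: integral_mult_right)
    qed
    also have "integral {0..2*pi} (\<lambda>t. f (t + pi)) = integral {0..2*pi} f"
      by (rule periodic_shift_integral[OF fc fp]) auto
    moreover have "fourier_coeff X j $ a $ b = integral {0..2*pi} f / complex_of_real (2*pi)"
      unfolding fourier_coeff_nth f_def by (rule refl)
    ultimately show ?thesis by (simp add: fourier_coeff_nth)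
  qed
  have "transpose (fourier_coeff X j) $ a $ b =
      (if even j then fourier_coeff X j else - fourier_coeff X j) $ a $ b" for a b
  proof -
    have "transpose (fourier_coeff X j) $ a $ b = fourier_coeff X j $ b $ a"
      by (simp add: transpose_def)
    also have "\<dots> = (-1) powi j * fourier_coeff X j $ a $ b" by (rule key)
    finally show ?thesis by simp
  qed
  then show ?thesis by (simp add: vec_eq_iff)
qed

lemma cscale_decomp: "cscale c M = Re c *\<^sub>R M + Im c *\<^sub>R cscale \<i> M"
proof -
  have "c = complex_of_real (Re c) + \<i> * complex_of_real (Im c)" by (simp add: complex_eq_iff)
  then have "c * x = Re c *\<^sub>R x + Im c *\<^sub>R (\<i> * x)" for x
    by (metis (no_types, lifting) mult.assoc mult.left_commute distrib_right scaleR_conv_of_real)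
  then show ?thesis by (simp add: vec_eq_iff)
qed

lemma bounded_linear_cscale: "bounded_linear (\<lambda>c. cscale c M)"
proof -
  have "bounded_linear (\<lambda>c. Re c *\<^sub>R M + Im c *\<^sub>R cscale \<i> M)"
    by (intro bounded_linear_add bounded_linear_compose[OF bounded_linear_scaleR_left]
        bounded_linear_Re bounded_linear_Im)
  then show ?thesis by (simp add: cscale_decomp[symmetric])
qed

lemma smooth_trig:
  fixes X :: "complex \<Rightarrow> complex^'n::finite^'n"
  assumes S: "finite S" and X: "\<And>t. X (cis t) = (\<Sum>i\<in>S. cscale (cis t powi i) (d i))"
  shows "smooth_loop X"
  unfolding smooth_loop_def
proof (intro exI conjI allI)
  define D where "D k t = (\<Sum>i\<in>S. cscale ((\<i> * of_int i) ^ k * cis (of_int i * t)) (d i))"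
    for k :: nat and t :: real
  show "D 0 = (\<lambda>t. X (cis t))"
    by (simp add: D_def X fun_eq_iff cis_power_int)
  fix k t
  have sc: "((\<lambda>t. (\<i> * of_int i) ^ k * cis (of_int i * t)) has_vector_derivative
        ((\<i> * of_int i) ^ Suc k * cis (of_int i * t))) (at t)" for i :: int
    by (auto intro!: derivative_eq_intros ext simp: has_vector_derivative_def scaleR_conv_of_real algebra_simps)
  show "(D k has_vector_derivative D (Suc k) t) (at t)"
    unfolding D_def[abs_def]
    by (intro has_vector_derivative_sum bounded_linear.has_vector_derivative[OF bounded_linear_cscale] sc)
qed

lemma mmult_nth: "(M ** N) $ a $ b = (\<Sum>k\<in>UNIV. M $ a $ k * N $ k $ b)"
  by (simp add: matrix_matrix_mult_def)

lemma cnj_mat_nth[simp]: "cnj_mat M $ a $ b = cnj (M $ a $ b)"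
  by (simp add: cnj_mat_def)

lemma cnj_mat_mult: "cnj_mat (M ** N) = cnj_mat M ** cnj_mat N"
  by (simp add: vec_eq_iff mmult_nth)

lemma cnj_mat_transpose: "cnj_mat (transpose M) = transpose (cnj_mat M)"
  by (simp add: vec_eq_iff transpose_def)

lemma cnj_mat_sum_cscale:
  "cnj_mat (\<Sum>i\<in>S. cscale (c i) (M i)) = (\<Sum>i\<in>S. cscale (cnj (c i)) (cnj_mat (M i)))"
  by (simp add: vec_eq_iff)

lemma transpose_sum_cscale:
  "transpose (\<Sum>i\<in>S. cscale (c i) (M i)) = (\<Sum>i\<in>S. cscale (c i) (transpose (M i)))"
  by (simp add: vec_eq_iff transpose_def)

lemma cscale_mmult_left: "cscale c M ** N = cscale c (M ** N)"
  by (simp add: vec_eq_iff mmult_nth sum_distrib_left mult.assoc)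

lemma cscale_mmult_right: "M ** cscale c N = cscale c (M ** N)"
  by (simp add: vec_eq_iff mmult_nth sum_distrib_left algebra_simps)

lemma sum_cscale_mmult_left: "(\<Sum>i\<in>S. cscale (c i) (M i)) ** N = (\<Sum>i\<in>S. cscale (c i) (M i ** N))"
  by (simp add: vec_eq_iff mmult_nth sum_distrib_left sum_distrib_right mult.assoc sum.swap[of _ S])

lemma matrix_inv_eq:
  fixes M N :: "'a::field^'n::finite^'n"
  assumes "M ** N = mat 1"
  shows "matrix_inv M = N"
proof -
  have NM: "N ** M = mat 1" using assms matrix_left_right_inverse by blast
  have "M ** matrix_inv M = mat 1 \<and> matrix_inv M ** M = mat 1"
    unfolding matrix_inv_def by (rule someI[of _ N]) (use assms NM in auto)
  then have "matrix_inv M ** M = mat 1" by blast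
  then have "matrix_inv M = matrix_inv M ** (M ** N)" using assms by simp
  also have "\<dots> = N" by (simp add: matrix_mul_assoc \<open>matrix_inv M ** M = mat 1\<close>)
  finally show ?thesis .
qed

lemma cont_mmult:
  fixes P Q :: "'x::topological_space \<Rightarrow> complex^'n::finite^'n"
  assumes "\<And>a b. continuous_on S (\<lambda>t. P t $ a $ b)" "\<And>a b. continuous_on S (\<lambda>t. Q t $ a $ b)"
  shows "continuous_on S (\<lambda>t. (P t ** Q t) $ a $ b)"
  unfolding mmult_nth by (intro continuous_intros assms)

lemma cont_transpose:
  fixes P :: "'x::topological_space \<Rightarrow> complex^'n::finite^'n"
  assumes "\<And>a b. continuous_on S (\<lambda>t. P t $ a $ b)"
  shows "continuous_on S (\<lambda>t. transpose (P t) $ a $ b)"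
  unfolding transpose_def using assms by simp

lemma real_cnj: "Im x = 0 \<Longrightarrow> cnj x = x"
  by (simp add: complex_eq_iff)

lemma smooth_loop_cont:
  fixes K :: "complex \<Rightarrow> complex^'n::finite^'n"
  assumes "smooth_loop K"
  shows "continuous_on UNIV (\<lambda>t. K (cis t))"
proof -
  obtain D :: "nat \<Rightarrow> real \<Rightarrow> complex^'n^'n" where D: "D 0 = (\<lambda>t. K (cis t))"
    "\<And>k t. (D k has_vector_derivative D (Suc k) t) (at t)"
    using assms unfolding smooth_loop_def by blast
  have "continuous (at t) (D 0)" for t
    using D(2)[of 0 t] by (rule has_vector_derivative_continuous)
  then have "continuous_on UNIV (D 0)" by (simp add: continuous_at_imp_continuous_on)
  then show ?thesis using D(1) by simp
qed

lemma Aw_cont: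
  fixes Ai :: "int \<Rightarrow> complex^'n::finite^'n"
  shows "continuous_on UNIV (\<lambda>t. (\<Sum>i\<in>I. cscale (cis t powi i) (Ai i)) $ a $ b)"
  by (simp add: cis_power_int, intro continuous_intros)

lemma Yprops:
  fixes K A :: "complex \<Rightarrow> complex^'n::finite^'n" and Ai :: "int \<Rightarrow> complex^'n^'n"
  assumes K: "K \<in> LG_Sigma"
    and Arep: "\<forall>z\<in>sphere 0 1. A z = (\<Sum>i\<in>I. cscale (z powi i) (Ai i))"
    and Areal: "\<forall>i a b. Im (Ai i $ a $ b) = 0"
    and Aev: "\<forall>i. even i \<longrightarrow> transpose (Ai i) = Ai i"
    and Aodd: "\<forall>i. odd i \<longrightarrow> transpose (Ai i) = - Ai i"
    and Yf: "Yf = (\<lambda>z. transpose (K (-z)) ** (\<Sum>i\<in>I. cscale (z powi i) (Ai i)) ** K z)"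
  shows "fourier_coeff (\<lambda>w. matrix_inv (K w) ** A w ** K w) = fourier_coeff Yf"
    and "Im (fourier_coeff Yf j $ a $ b) = 0"
    and "transpose (fourier_coeff Yf j) = (if even j then fourier_coeff Yf j else - fourier_coeff Yf j)"
proof -
  have sm: "smooth_loop K" and cj: "\<forall>z\<in>sphere 0 1. cnj_mat (K z) = K (cnj z)"
    and inv: "\<forall>z\<in>sphere 0 1. K z ** transpose (K (- z)) = mat 1"
    using K unfolding LG_Sigma_def LG_def by auto
  show "fourier_coeff (\<lambda>w. matrix_inv (K w) ** A w ** K w) = fourier_coeff Yf"
  proof (rule fourier_coeff_cong, intro ballI)
    fix z :: complex assume z: "z \<in> sphere 0 1"
    have "matrix_inv (K z) = transpose (K (-z))" using inv z by (intro matrix_inv_eq) auto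
    then show "matrix_inv (K z) ** A z ** K z = Yf z" using Arep z Yf by simp
  qed
  have KC: "continuous_on UNIV (\<lambda>t. K (cis t))" by (rule smooth_loop_cont[OF sm])
  have KC1: "continuous_on UNIV (\<lambda>t. K (cis t) $ a $ b)" for a b
    by (intro continuous_on_component KC)
  have KC2: "continuous_on UNIV (\<lambda>t. K (- cis t) $ a $ b)" for a b
  proof -
    have "continuous_on UNIV (\<lambda>t. K (cis (t + pi)))"
      by (rule continuous_on_compose2[OF KC]) (auto intro!: continuous_intros)
    then show ?thesis by (simp add: cis_add_pi continuous_on_component)
  qed
  have YC: "continuous_on UNIV (\<lambda>t. Yf (cis t) $ a $ b)" for a b
    unfolding Yf by (intro cont_mmult cont_transpose KC1 KC2 Aw_cont)
  have AR: "cnj_mat (Ai i) = Ai i" for i using Areal by (simp add: vec_eq_iff real_cnj)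
  show "Im (fourier_coeff Yf j $ a $ b) = 0"
  proof (rule coeff_real[OF YC], intro ballI)
    fix z :: complex assume z: "z \<in> sphere 0 1"
    then have mz: "- z \<in> sphere 0 1" by simp
    show "cnj_mat (Yf z) = Yf (cnj z)"
      unfolding Yf using cj z mz
      by (simp add: cnj_mat_mult cnj_mat_transpose cnj_mat_sum_cscale AR)
  qed
  have AT: "transpose (\<Sum>i\<in>I. cscale (z powi i) (Ai i)) = (\<Sum>i\<in>I. cscale ((- z) powi i) (Ai i))" for z
    unfolding transpose_sum_cscale
  proof (intro sum.cong refl)
    fix i assume "i \<in> I"
    show "cscale (z powi i) (transpose (Ai i)) = cscale ((- z) powi i) (Ai i)"
    proof (cases "even i")
      case True then show ?thesis using Aev by simp
    next
      case False then show ?thesis using Aodd by (simp add: vec_eq_iff)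
    qed
  qed
  show "transpose (fourier_coeff Yf j) = (if even j then fourier_coeff Yf j else - fourier_coeff Yf j)"
  proof (rule coeff_sym[OF YC], intro ballI)
    fix z :: complex assume z: "z \<in> sphere 0 1"
    show "transpose (Yf z) = Yf (- z)"
      unfolding Yf by (simp add: matrix_transpose_mul matrix_mul_assoc AT)
  qed
qed

lemma inv_norm_ge: "(x::complex) \<noteq> 0 \<Longrightarrow> norm x \<le> 1 \<Longrightarrow> 1 \<le> norm (inverse x)"
  by (simp add: norm_inverse one_le_inverse)

lemma inv_norm_gt: "(x::complex) \<noteq> 0 \<Longrightarrow> norm x < 1 \<Longrightarrow> 1 < norm (inverse x)"
  by (simp add: norm_inverse one_less_inverse)

lemma H_props:
  fixes Gm H :: "complex \<Rightarrow> complex^'n::finite^'n"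
  assumes cont: "continuous_on {z. 1 \<le> norm z} Gm"
    and hol: "\<forall>a b. (\<lambda>z. Gm z $ a $ b) holomorphic_on {z. 1 < norm z}"
    and lim: "(Gm \<longlongrightarrow> mat 1) at_infinity"
    and H: "H = (\<lambda>w. if w = 0 then mat 1 else Gm (inverse w))"
  shows "continuous_on (cball 0 1) H"
    and "(\<lambda>w. H w $ a $ b) holomorphic_on (ball 0 1 - {0})"
proof -
  have img: "inverse ` (cball 0 1 - {0}) \<subseteq> {z::complex. 1 \<le> norm z}"
    by (auto intro!: inv_norm_ge)
  have c1: "continuous_on (cball 0 1 - {0}) (\<lambda>w. Gm (inverse w))"
    by (rule continuous_on_compose2[OF cont]) (auto intro!: continuous_intros inv_norm_ge)
  have c2: "continuous_on (cball 0 1 - {0}) H"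
    using c1 by (rule continuous_on_cong[THEN iffD1, rotated 2]) (auto simp: H)
  show "continuous_on (cball 0 1) H"
    unfolding continuous_on_eq_continuous_within
  proof (intro ballI)
    fix x :: complex assume x: "x \<in> cball 0 1"
    show "continuous (at x within cball 0 1) H"
    proof (cases "x = 0")
      case True
      have "((\<lambda>w. Gm (inverse w)) \<longlongrightarrow> mat 1) (at 0)"
        by (rule filterlim_compose[OF lim filterlim_inverse_at_infinity])
      moreover have "eventually (\<lambda>w. Gm (inverse w) = H w) (at (0::complex))"
        unfolding eventually_at_filter H by simp
      ultimately have "(H \<longlongrightarrow> mat 1) (at 0)"
        by (rule Lim_transform_eventually)
      then have "(H \<longlongrightarrow> mat 1) (at 0 within cball 0 1)"
        by (rule tendsto_mono[OF at_le, rotated]) simp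
      then have "(H \<longlongrightarrow> H 0) (at 0 within cball 0 1)"
        by (simp add: H)
      then show ?thesis using True by (simp add: continuous_within)
    next
      case False
      have "continuous (at x within cball 0 1 - {0}) H"
        using c2 x False by (simp add: continuous_on_eq_continuous_within)
      moreover have "at x within cball 0 1 - {0} = at x within cball 0 1"
        by (rule at_within_nhd[of x "- {0}"]) (use False in auto)
      ultimately show ?thesis by simp
    qed
  qed
  have "(\<lambda>w. Gm (inverse w) $ a $ b) holomorphic_on (ball 0 1 - {0})"
  proof -
    have "((\<lambda>z. Gm z $ a $ b) \<circ> inverse) holomorphic_on (ball 0 1 - {0})"
      by (rule holomorphic_on_compose_gen[OF _ hol[rule_format]])
        (auto intro!: holomorphic_intros inv_norm_gt)
    then show ?thesis by (simp add: o_def)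
  qed
  then show "(\<lambda>w. H w $ a $ b) holomorphic_on (ball 0 1 - {0})"
    by (rule holomorphic_cong[THEN iffD1, rotated 2]) (auto simp: H)
qed

lemma F_props:
  fixes H :: "complex \<Rightarrow> complex^'n::finite^'n" and B :: "int \<Rightarrow> complex^'n^'n"
  assumes Hc: "continuous_on (cball 0 1) H"
    and Hh: "\<And>c d. (\<lambda>w. H w $ c $ d) holomorphic_on (ball 0 1 - {0})"
  shows "continuous_on (cball 0 1)
           (\<lambda>w. w ^ N * (transpose (H (-w)) ** (\<Sum>i\<in>I. cscale (w ^ e i) (B i)) ** H w) $ a $ b)"
    and "(\<lambda>w. w ^ N * (transpose (H (-w)) ** (\<Sum>i\<in>I. cscale (w ^ e i) (B i)) ** H w) $ a $ b)
           holomorphic_on (ball 0 1 - {0})"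
proof -
  have Hm: "continuous_on (cball 0 1) (\<lambda>w. H (- w))"
    by (rule continuous_on_compose2[OF Hc]) (auto intro!: continuous_intros)
  have Hc': "continuous_on (cball 0 1) (\<lambda>w. H w $ c $ d)" for c d
    by (intro continuous_on_component Hc)
  have Hm': "continuous_on (cball 0 1) (\<lambda>w. H (- w) $ c $ d)" for c d
    by (intro continuous_on_component Hm)
  show "continuous_on (cball 0 1)
           (\<lambda>w. w ^ N * (transpose (H (-w)) ** (\<Sum>i\<in>I. cscale (w ^ e i) (B i)) ** H w) $ a $ b)"
    unfolding mmult_nth by (simp add: transpose_def, intro continuous_intros Hc' Hm')
  have Hmh: "(\<lambda>w. H (- w) $ c $ d) holomorphic_on (ball 0 1 - {0})" for c d
  proof -
    have "((\<lambda>w. H w $ c $ d) \<circ> uminus) holomorphic_on (ball 0 1 - {0})"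
      by (rule holomorphic_on_compose_gen[OF _ Hh]) (auto intro!: holomorphic_intros)
    then show ?thesis by (simp add: o_def)
  qed
  show "(\<lambda>w. w ^ N * (transpose (H (-w)) ** (\<Sum>i\<in>I. cscale (w ^ e i) (B i)) ** H w) $ a $ b)
           holomorphic_on (ball 0 1 - {0})"
    unfolding mmult_nth by (simp add: transpose_def, intro holomorphic_intros Hh Hmh)
qed

lemma powi_split:
  fixes z :: complex and m i :: int
  assumes "z \<noteq> 0" "- m \<le> i"
  shows "z powi i = z powi (- m) * z ^ nat (i + m)"
proof -
  have "z powi i = z powi (- m + (i + m))" by simp
  also have "\<dots> = z powi (- m) * z powi (i + m)" by (rule power_int_add) (use assms in auto)
  also have "z powi (i + m) = z powi int (nat (i + m))" using assms by simp
  also have "\<dots> = z ^ nat (i + m)" by (rule power_int_of_nat)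
  finally show ?thesis .
qed

lemma cscale_sum_factor:
  "(\<Sum>i\<in>I. cscale (c * x i) (M i)) = cscale c (\<Sum>i\<in>I. cscale (x i) (M i))"
  by (simp add: vec_eq_iff sum_distrib_left mult.assoc)

lemma Aw_factor:
  fixes z :: complex and m :: int and Ai :: "int \<Rightarrow> complex^'n::finite^'n"
  assumes "z \<noteq> 0" "\<forall>i\<in>I. - m \<le> i"
  shows "(\<Sum>i\<in>I. cscale (z powi i) (Ai i)) = cscale (z powi (- m)) (\<Sum>i\<in>I. cscale (z ^ nat (i + m)) (Ai i))"
proof -
  have "(\<Sum>i\<in>I. cscale (z powi i) (Ai i)) = (\<Sum>i\<in>I. cscale (z powi (- m) * z ^ nat (i + m)) (Ai i))"
  proof (intro sum.cong refl)
    fix i assume "i \<in> I"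
    then have "z powi i = z powi (- m) * z ^ nat (i + m)" using assms by (intro powi_split) auto
    then show "cscale (z powi i) (Ai i) = cscale (z powi (- m) * z ^ nat (i + m)) (Ai i)" by simp
  qed
  then show ?thesis by (simp only: cscale_sum_factor)
qed

lemma Y_vanish:
  fixes gp :: "complex \<Rightarrow> complex^'n::finite^'n" and Ai :: "int \<Rightarrow> complex^'n^'n" and m :: int
  assumes gp: "gp \<in> LG_Sigma_plus" and j: "j < - m" and I: "\<forall>i\<in>I. - m \<le> i"
    and Yf: "Yf = (\<lambda>z. transpose (gp (-z)) ** (\<Sum>i\<in>I. cscale (z powi i) (Ai i)) ** gp z)"
  shows "fourier_coeff Yf j = 0"
proof -
  obtain G :: "complex \<Rightarrow> complex^'n^'n" where Gc: "continuous_on (cball 0 1) G"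
    and Gh: "\<forall>a b. (\<lambda>z. G z $ a $ b) holomorphic_on ball 0 1"
    and Geq: "\<forall>z\<in>sphere 0 1. G z = gp z"
    using gp unfolding LG_Sigma_plus_def by blast
  have Gh': "(\<lambda>z. G z $ a $ b) holomorphic_on (ball 0 1 - {0})" for a b
    using Gh holomorphic_on_subset by blast
  define N where "N = nat (- j - m - 1)"
  have "fourier_coeff Yf j $ a $ b = 0" for a b
  proof -
    define F where "F w = w ^ N * (transpose (G (-w)) ** (\<Sum>i\<in>I. cscale (w ^ nat (i + m)) (Ai i)) ** G w) $ a $ b" for w
    have eq: "cis (- of_int j * t) * Yf (cis t) $ a $ b = cis t * F (cis t)" for t
    proof -
      define z where "z = cis t"
      have z0: "z \<noteq> 0" and zs: "z \<in> sphere 0 1" and mzs: "- z \<in> sphere 0 1" by (auto simp: z_def)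
      define W where "W = transpose (G (-z)) ** (\<Sum>i\<in>I. cscale (z ^ nat (i + m)) (Ai i)) ** G z"
      have "Yf z = cscale (z powi (- m)) W"
        using Geq zs mzs z0 I
        by (simp add: Yf W_def Aw_factor[of z I m] cscale_mmult_left cscale_mmult_right)
      moreover have "cis (- of_int j * t) = z powi (- j)"
        by (simp add: z_def cis_power_int)
      moreover have "z powi (- j) * z powi (- m) = z * z ^ N"
      proof -
        have "z powi (- j) * z powi (- m) = z powi (1 + int N)"
          using z0 j by (simp add: power_int_add[symmetric] N_def)
        also have "\<dots> = z * z ^ N" using z0 by (simp add: power_int_add)
        finally show ?thesis .
      qed
      ultimately show ?thesis
        by (simp add: F_def W_def z_def[symmetric] mult.assoc[symmetric])
    qed
    have "integral {0..2*pi} (\<lambda>t. cis (- of_int j * t) * Yf (cis t) $ a $ b) =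
          integral {0..2*pi} (\<lambda>t. cis t * F (cis t))"
      by (simp only: eq)
    also have "\<dots> = 0"
      by (rule cauchy_disc_integral) (unfold F_def, (rule F_props[OF Gc Gh'])+)
    finally show ?thesis by (simp add: fourier_coeff_nth)
  qed
  then show ?thesis by (simp add: vec_eq_iff)
qed

lemma Z_vanish:
  fixes gm :: "complex \<Rightarrow> complex^'n::finite^'n" and Ai :: "int \<Rightarrow> complex^'n^'n" and p :: int
  assumes gm: "gm \<in> LG_Sigma_minus" and j: "p < j" and I: "\<forall>i\<in>I. i \<le> p"
    and Zf: "Zf = (\<lambda>z. transpose (gm (-z)) ** (\<Sum>i\<in>I. cscale (z powi i) (Ai i)) ** gm z)"
  shows "fourier_coeff Zf j = 0"
proof -
  obtain Gm :: "complex \<Rightarrow> complex^'n^'n" where Gc: "continuous_on {z. 1 \<le> norm z} Gm"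
    and Gh: "\<forall>a b. (\<lambda>z. Gm z $ a $ b) holomorphic_on {z. 1 < norm z}"
    and Gl: "(Gm \<longlongrightarrow> mat 1) at_infinity"
    and Geq: "\<forall>z\<in>sphere 0 1. Gm z = gm z"
    using gm unfolding LG_Sigma_minus_def by blast
  define H where "H = (\<lambda>w. if w = 0 then mat 1 else Gm (inverse w))"
  have Hc: "continuous_on (cball 0 1) H" and Hh: "\<And>a b. (\<lambda>w. H w $ a $ b) holomorphic_on (ball 0 1 - {0})"
    using H_props[OF Gc Gh Gl H_def] by auto
  define N where "N = nat (j - p - 1)"
  have I': "\<forall>i\<in>uminus ` I. - p \<le> i" using I by auto
  have "fourier_coeff Zf j $ a $ b = 0" for a b
  proof -
    define F where "F w = w ^ N * (transpose (H (-w)) ** (\<Sum>i\<in>uminus ` I. cscale (w ^ nat (i + p)) (Ai (- i))) ** H w) $ a $ b" for w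
    have eq: "cis (- of_int j * t) * Zf (cis t) $ a $ b = cis (- t) * F (cis (- t))" for t
    proof -
      define z where "z = cis t"
      define w where "w = cis (- t)"
      have z0: "z \<noteq> 0" and zs: "z \<in> sphere 0 1" and mzs: "- z \<in> sphere 0 1" by (auto simp: z_def)
      have w0: "w \<noteq> 0" and zw: "z = inverse w" by (auto simp: z_def w_def)
      have Hw: "H w = gm z" using Geq zs w0 by (simp add: H_def zw)
      have Hmw: "H (- w) = gm (- z)" using Geq mzs w0 by (simp add: H_def zw)
      have Aw: "(\<Sum>i\<in>I. cscale (z powi i) (Ai i)) = (\<Sum>i\<in>uminus ` I. cscale (w powi i) (Ai (- i)))"
        by (subst sum.reindex) (auto simp: inj_on_def zw power_int_inverse power_int_minus)
      define W where "W = transpose (H (-w)) ** (\<Sum>i\<in>uminus ` I. cscale (w ^ nat (i + p)) (Ai (- i))) ** H w"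
      have "Zf z = cscale (w powi (- p)) W"
        using Hw Hmw w0 I'
        by (simp add: Zf W_def Aw Aw_factor[of w "uminus ` I" p] cscale_mmult_left cscale_mmult_right)
      moreover have "cis (- of_int j * t) = w powi j"
        by (simp add: w_def cis_power_int)
      moreover have "w powi j * w powi (- p) = w * w ^ N"
      proof -
        have "w powi j * w powi (- p) = w powi (1 + int N)"
          using w0 j by (simp add: power_int_add[symmetric] N_def)
        also have "\<dots> = w * w ^ N" using w0 by (simp add: power_int_add)
        finally show ?thesis .
      qed
      ultimately show ?thesis
        by (simp add: F_def W_def z_def[symmetric] w_def[symmetric] mult.assoc[symmetric])
    qed
    have "integral {0..2*pi} (\<lambda>t. cis (- of_int j * t) * Zf (cis t) $ a $ b) =
          integral {0..2*pi} (\<lambda>t. cis (- t) * F (cis (- t)))"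
      by (simp only: eq)
    also have "\<dots> = 0"
      by (rule cauchy_disc_integral') (unfold F_def, (rule F_props[OF Hc Hh])+)
    finally show ?thesis by (simp add: fourier_coeff_nth)
  qed
  then show ?thesis by (simp add: vec_eq_iff)
qed

lemma transpose_zero_mat: "transpose (0::complex^'n::finite^'m::finite) = 0"
  by (simp add: vec_eq_iff transpose_def)

lemma int_range_split:
  "{- int m..int p} = (\<lambda>k. - int (Suc k)) ` {..<m} \<union> int ` {..p}"
proof (intro equalityI subsetI)
  fix x assume x: "x \<in> {- int m..int p}"
  show "x \<in> (\<lambda>k. - int (Suc k)) ` {..<m} \<union> int ` {..p}"
  proof (cases "x < 0")
    case True
    then have "x = - int (Suc (nat (- x - 1)))" and "nat (- x - 1) < m" using x by auto
    then show ?thesis by blast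
  next
    case False
    then have "x = int (nat x)" and "nat x \<le> p" using x by auto
    then show ?thesis by blast
  qed
qed auto

lemma trig_split:
  fixes z :: complex and cY cZ :: "int \<Rightarrow> complex^'n::finite^'n"
  assumes z: "z \<noteq> 0"
  shows "(\<Sum>k<m. cscale (inverse z ^ Suc k) (cY (- int (Suc k)))) + (\<Sum>k\<in>{..p}. cscale (z ^ k) (cZ (int k)))
     = (\<Sum>j\<in>{- int m..int p}. cscale (z powi j) (if j < 0 then cY j else cZ j))"
proof -
  let ?d = "\<lambda>j. cscale (z powi j) (if j < 0 then cY j else cZ j)"
  have disj: "(\<lambda>k. - int (Suc k)) ` {..<m} \<inter> int ` {..p} = {}" by auto
  have "(\<Sum>j\<in>{- int m..int p}. ?d j) = (\<Sum>j\<in>(\<lambda>k. - int (Suc k)) ` {..<m}. ?d j) + (\<Sum>j\<in>int ` {..p}. ?d j)"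
    unfolding int_range_split by (rule sum.union_disjoint) (use disj in auto)
  also have "(\<Sum>j\<in>(\<lambda>k. - int (Suc k)) ` {..<m}. ?d j) = (\<Sum>k<m. ?d (- int (Suc k)))"
    by (subst sum.reindex) (auto simp: inj_on_def)
  also have "\<dots> = (\<Sum>k<m. cscale (inverse z ^ Suc k) (cY (- int (Suc k))))"
  proof (intro sum.cong refl)
    fix k
    have "z powi (- int (Suc k)) = inverse z ^ Suc k"
      by (simp only: power_int_minus power_int_of_nat power_inverse)
    then show "?d (- int (Suc k)) = cscale (inverse z ^ Suc k) (cY (- int (Suc k)))" by simp
  qed
  also have "(\<Sum>j\<in>int ` {..p}. ?d j) = (\<Sum>k\<in>{..p}. ?d (int k))"
    by (subst sum.reindex) (auto simp: inj_on_def)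
  also have "\<dots> = (\<Sum>k\<in>{..p}. cscale (z ^ k) (cZ (int k)))"
    by (intro sum.cong refl) simp
  finally show ?thesis by simp
qed

theorem proposition3p2:
  fixes g gp gm A :: "complex \<Rightarrow> complex ^ 'n::finite ^ 'n" and m p :: nat
  assumes "p \<ge> 1"
    and "g \<in> G_tilde"
    and "gp \<in> LG_Sigma_plus" and "gm \<in> LG_Sigma_minus"
    and "\<forall>z\<in>sphere 0 1. g z = gp z ** matrix_inv (gm z)"
    and "A \<in> g_star_mp m p"
  shows "Ad_star gp gm A \<in> g_star_mp m p"
proof -
  define I where "I = {- int m..int p}"
  define Ai where "Ai = fourier_coeff A"
  have Arep: "\<forall>z\<in>sphere 0 1. A z = (\<Sum>i\<in>I. cscale (z powi i) (Ai i))"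
    and Areal: "\<forall>i a b. Im (Ai i $ a $ b) = 0"
    and Aev: "\<forall>i. even i \<longrightarrow> transpose (Ai i) = Ai i"
    and Aodd: "\<forall>i. odd i \<longrightarrow> transpose (Ai i) = - Ai i"
    using assms(6) unfolding g_star_mp_def Lg_sigma_star_def I_def Ai_def by auto
  have gpS: "gp \<in> LG_Sigma" using assms(3) unfolding LG_Sigma_plus_def by auto
  have gmS: "gm \<in> LG_Sigma" using assms(4) unfolding LG_Sigma_minus_def by auto
  define Yf where "Yf = (\<lambda>z. transpose (gp (-z)) ** (\<Sum>i\<in>I. cscale (z powi i) (Ai i)) ** gp z)"
  define Zf where "Zf = (\<lambda>z. transpose (gm (-z)) ** (\<Sum>i\<in>I. cscale (z powi i) (Ai i)) ** gm z)"
  note YP = Yprops[OF gpS Arep Areal Aev Aodd Yf_def]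
  note ZP = Yprops[OF gmS Arep Areal Aev Aodd Zf_def]
  define cY where "cY = fourier_coeff Yf"
  define cZ where "cZ = fourier_coeff Zf"
  have Yv: "cY j = 0" if "j < - int m" for j
    unfolding cY_def by (rule Y_vanish[OF assms(3) that _ Yf_def]) (auto simp: I_def)
  have Zv: "cZ j = 0" if "int p < j" for j
    unfolding cZ_def by (rule Z_vanish[OF assms(4) that _ Zf_def]) (auto simp: I_def)
  define d where "d j = (if j < 0 then cY j else cZ j)" for j
  define T where "T z = (\<Sum>j\<in>I. cscale (z powi j) (d j))" for z
  have AdT: "Ad_star gp gm A z = T z" if z: "z \<in> sphere 0 1" for z
  proof -
    have z0: "z \<noteq> 0" using z by auto
    have "Pi_minus (\<lambda>w. matrix_inv (gp w) ** A w ** gp w) z =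
        (\<Sum>k. cscale (inverse z ^ Suc k) (cY (- int (Suc k))))"
      unfolding Pi_minus_def YP(1) cY_def ..
    also have "\<dots> = (\<Sum>k<m. cscale (inverse z ^ Suc k) (cY (- int (Suc k))))"
    proof (rule suminf_finite)
      fix k assume "k \<notin> {..<m}"
      then have "cY (- int (Suc k)) = 0" by (intro Yv) auto
      then show "cscale (inverse z ^ Suc k) (cY (- int (Suc k))) = 0" by (simp add: vec_eq_iff)
    qed simp
    finally have 1: "Pi_minus (\<lambda>w. matrix_inv (gp w) ** A w ** gp w) z =
        (\<Sum>k<m. cscale (inverse z ^ Suc k) (cY (- int (Suc k))))" .
    have "Pi_plus (\<lambda>w. matrix_inv (gm w) ** A w ** gm w) z =
        (\<Sum>k. cscale (z ^ k) (cZ (int k)))"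
      unfolding Pi_plus_def ZP(1) cZ_def ..
    also have "\<dots> = (\<Sum>k\<in>{..p}. cscale (z ^ k) (cZ (int k)))"
    proof (rule suminf_finite)
      fix k assume "k \<notin> {..p}"
      then have "cZ (int k) = 0" by (intro Zv) auto
      then show "cscale (z ^ k) (cZ (int k)) = 0" by (simp add: vec_eq_iff)
    qed simp
    finally have 2: "Pi_plus (\<lambda>w. matrix_inv (gm w) ** A w ** gm w) z =
        (\<Sum>k\<in>{..p}. cscale (z ^ k) (cZ (int k)))" .
    show ?thesis
      unfolding Ad_star_def 1 2 T_def d_def I_def by (rule trig_split[OF z0])
  qed
  have finI: "finite I" by (simp add: I_def)
  have FC: "fourier_coeff (Ad_star gp gm A) j = (if j \<in> I then d j else 0)" for j
    by (rule coeff_trig[OF finI]) (use AdT T_def in auto)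
  have smooth: "smooth_loop (Ad_star gp gm A)"
    by (rule smooth_trig[OF finI]) (simp add: AdT[of "cis t" for t] T_def)
  have real: "Im (fourier_coeff (Ad_star gp gm A) j $ a $ b) = 0" for j a b
    using YP(2)[of j a b] ZP(2)[of j a b] by (simp add: FC d_def cY_def cZ_def)
  have sym: "transpose (fourier_coeff (Ad_star gp gm A) j) =
      (if even j then fourier_coeff (Ad_star gp gm A) j else - fourier_coeff (Ad_star gp gm A) j)" for j
    using YP(3)[of j] ZP(3)[of j] by (simp add: FC d_def cY_def cZ_def transpose_zero_mat)
  have rep: "\<forall>z\<in>sphere 0 1. Ad_star gp gm A z =
      (\<Sum>j\<in>{- int m..int p}. cscale (z powi j) (fourier_coeff (Ad_star gp gm A) j))"
    using AdT by (simp add: T_def FC I_def)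
  show ?thesis
    unfolding g_star_mp_def Lg_sigma_star_def
    using smooth real sym rep by auto
qed

end
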